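(* Over Łukasiewicz logic Ł, the theory $T_Q$ proves: (1) every bookkeeping formula for $q$-variables valid in the standard MV-algebra, i.e. for all rationals $r,s\in[0,1]$ with chosen representations $r=m/n$, $s=k/l$, and $r*s=p/t$ (with $m\le n$, etc.), and each binary connective $*\in\{\cdot,\to,\oplus,\land,\lor,\equiv\}$, the formula $(q_{m/n} * q_{k/l})\equiv q_{p/t}$, where $r*s$ is computed in $[0,1]_{\text{Ł}}$, and likewise $\neg q_{m/n}\equiv q_{p/t}$ whenever $1-m/n=p/t$; (2) $q_{m/n}\equiv q_{m'/n'}$ whenever $m/n=m'/n'$; (3) $q_{m/n}\equiv\overline1$ whenever $m=n$.
   Context: Łukasiewicz logic Ł is the propositional logic in the connectives $\cdot,\to,\land,\lor,\neg,\oplus,\equiv,\overline0,\overline1$ with modus ponens; it is finitely strongly complete w.r.t. the standard MV-algebra $[0,1]_{\text{Ł}}$ (domain $[0,1]$, $x\cdot y=\max(0,x+y-1)$, $x\to y=\min(1,1-x+y)$, $\neg x=1-x$, $x\oplus y=\min(1,x+y)$, $\land=\min$, $\lor=\max$, $x\equiv y=1-|x-y|$). $x^k$ is the $k$-fold product, $kx$ the $k$-fold $\oplus$-sum. Let $Q=\{q_{m/n}\mid m,n\in\mathbb N,\ m\le n,\ n>0\}$ be propositional variables, one per pair $(m,n)$. The theory $T_Q$ has axioms: $q_{0/n}\equiv\overline0$ for $n>0$; $q_{1/1}\equiv\overline1$; $q_{1/n}\equiv(\neg q_{1/n})^{n-1}$ for $n\ge2$; $q_{m/n}\equiv m\,q_{1/n}$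 for $m\le n$, $n\ge2$. *)

theory Defs
  imports Complex_Main
begin

datatype fm =
    Var "nat \<times> nat"        \<comment> \<open>propositional variable; Var (m,n) is q_{m/n}\<close>
  | Bot
  | Conj fm fm
  | Imp fm fm

definition Neg :: "fm \<Rightarrow> fm" where "Neg a = Imp a Bot"
definition Top :: fm where "Top = Neg Bot"
definition Wedge :: "fm \<Rightarrow> fm \<Rightarrow> fm" where "Wedge a b = Conj a (Imp a b)"
definition Vee :: "fm \<Rightarrow> fm \<Rightarrow> fm" where
  "Vee a b = Wedge (Imp (Imp a b) b) (Imp (Imp b a) a)"
definition Oplus :: "fm \<Rightarrow> fm \<Rightarrow> fm" where "Oplus a b = Neg (Conj (Neg a) (Neg b))"
definition Equiv :: "fm \<Rightarrow> fm \<Rightarrow> fm" where "Equiv a b = Conj (Imp a b) (Imp b a)"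

fun Pow :: "fm \<Rightarrow> nat \<Rightarrow> fm" where
  "Pow a 0 = Top"
| "Pow a (Suc 0) = a"
| "Pow a (Suc (Suc k)) = Conj a (Pow a (Suc k))"

fun Mult :: "nat \<Rightarrow> fm \<Rightarrow> fm" where
  "Mult 0 a = Bot"
| "Mult (Suc 0) a = a"
| "Mult (Suc (Suc k)) a = Oplus a (Mult (Suc k) a)"

definition q :: "nat \<Rightarrow> nat \<Rightarrow> fm" where "q m n = Var (m, n)"

inductive Luk_axiom :: "fm \<Rightarrow> bool" where
  A1: "Luk_axiom (Imp (Imp a b) (Imp (Imp b c) (Imp a c)))"
| A2: "Luk_axiom (Imp (Conj a b) a)"
| A3: "Luk_axiom (Imp (Conj a b) (Conj b a))"
| A4: "Luk_axiom (Imp (Conj a (Imp a b)) (Conj b (Imp b a)))"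
| A5a: "Luk_axiom (Imp (Imp a (Imp b c)) (Imp (Conj a b) c))"
| A5b: "Luk_axiom (Imp (Imp (Conj a b) c) (Imp a (Imp b c)))"
| A6: "Luk_axiom (Imp (Imp (Imp a b) c) (Imp (Imp (Imp b a) c) c))"
| A7: "Luk_axiom (Imp Bot a)"
| DN: "Luk_axiom (Imp (Neg (Neg a)) a)"

inductive provable :: "fm set \<Rightarrow> fm \<Rightarrow> bool" (infix "\<turnstile>\<^sub>L" 55) where
  ax: "Luk_axiom a \<Longrightarrow> T \<turnstile>\<^sub>L a"
| hyp: "a \<in> T \<Longrightarrow> T \<turnstile>\<^sub>L a"
| mp: "T \<turnstile>\<^sub>L a \<Longrightarrow> T \<turnstile>\<^sub>L Imp a b \<Longrightarrow> T \<turnstile>\<^sub>L b"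

definition TQ :: "fm set" where
  "TQ = {Equiv (q 0 n) Bot | n. n > 0}
      \<union> {Equiv (q 1 1) Top}
      \<union> {Equiv (q 1 n) (Pow (Neg (q 1 n)) (n - 1)) | n. n \<ge> 2}
      \<union> {Equiv (q m n) (Mult m (q 1 n)) | m n. m \<le> n \<and> n \<ge> 2}"

datatype bconn = BProd | BImp | BOplus | BAnd | BOr | BEquiv

fun bsyn :: "bconn \<Rightarrow> fm \<Rightarrow> fm \<Rightarrow> fm" where
  "bsyn BProd a b = Conj a b"
| "bsyn BImp a b = Imp a b"
| "bsyn BOplus a b = Oplus a b"
| "bsyn BAnd a b = Wedge a b"
| "bsyn BOr a b = Vee a b"
| "bsyn BEquiv a b = Equiv a b"

fun bsem :: "bconn \<Rightarrow> real \<Rightarrow> real \<Rightarrow> real" where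
  "bsem BProd x y = max 0 (x + y - 1)"
| "bsem BImp x y = min 1 (1 - x + y)"
| "bsem BOplus x y = min 1 (x + y)"
| "bsem BAnd x y = min x y"
| "bsem BOr x y = max x y"
| "bsem BEquiv x y = 1 - \<bar>x - y\<bar>"

end

theory Submission
  imports Defs
begin


lemma trans_r: "T \<turnstile>\<^sub>L Imp a b \<Longrightarrow> T \<turnstile>\<^sub>L Imp b c \<Longrightarrow> T \<turnstile>\<^sub>L Imp a c"
  by (meson Luk_axiom.A1 provable.ax provable.mp)
lemma curry_r: "T \<turnstile>\<^sub>L Imp (Conj a b) c \<Longrightarrow> T \<turnstile>\<^sub>L Imp a (Imp b c)"
  by (meson Luk_axiom.A5b provable.ax provable.mp)
lemma uncurry_r: "T \<turnstile>\<^sub>L Imp a (Imp b c) \<Longrightarrow> T \<turnstile>\<^sub>L Imp (Conj a b) c"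
  by (meson Luk_axiom.A5a provable.ax provable.mp)
lemma K_r: "T \<turnstile>\<^sub>L Imp a (Imp b a)"
  by (meson Luk_axiom.A2 curry_r provable.ax)
lemma exch_r: "T \<turnstile>\<^sub>L Imp a (Imp b c) \<Longrightarrow> T \<turnstile>\<^sub>L Imp b (Imp a c)"
  by (meson Luk_axiom.A3 curry_r provable.ax trans_r uncurry_r)
lemma Top_r: "T \<turnstile>\<^sub>L Top"
  unfolding Top_def Neg_def by (simp add: Luk_axiom.A7 provable.ax)
lemma refl_r: "T \<turnstile>\<^sub>L Imp a a"
  by (meson K_r Top_r exch_r provable.mp)
lemma conjmono_l: "T \<turnstile>\<^sub>L Imp a b \<Longrightarrow> T \<turnstile>\<^sub>L Imp (Conj a c) (Conj b c)"
  by (meson curry_r refl_r trans_r uncurry_r)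
lemma conjcomm_r: "T \<turnstile>\<^sub>L Imp (Conj a b) (Conj b a)"
  by (simp add: Luk_axiom.A3 provable.ax)
lemma conjmono_r: "T \<turnstile>\<^sub>L Imp a b \<Longrightarrow> T \<turnstile>\<^sub>L Imp (Conj c a) (Conj c b)"
  by (meson conjcomm_r conjmono_l trans_r)
lemma impmono1: "T \<turnstile>\<^sub>L Imp a b \<Longrightarrow> T \<turnstile>\<^sub>L Imp (Imp b c) (Imp a c)"
  by (meson Luk_axiom.A1 provable.ax provable.mp)
lemma impmono2: "T \<turnstile>\<^sub>L Imp b c \<Longrightarrow> T \<turnstile>\<^sub>L Imp (Imp a b) (Imp a c)"
  by (meson Luk_axiom.A1 exch_r provable.ax provable.mp)
lemma conjI_r: "T \<turnstile>\<^sub>L a \<Longrightarrow> T \<turnstile>\<^sub>L b \<Longrightarrow> T \<turnstile>\<^sub>L Conj a b"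
  by (meson curry_r provable.mp refl_r)
lemma conjE1: "T \<turnstile>\<^sub>L Conj a b \<Longrightarrow> T \<turnstile>\<^sub>L a"
  by (meson Luk_axiom.A2 provable.ax provable.mp)
lemma conjE2: "T \<turnstile>\<^sub>L Conj a b \<Longrightarrow> T \<turnstile>\<^sub>L b"
  by (meson conjE1 conjcomm_r provable.mp)
lemma top_imp: "T \<turnstile>\<^sub>L Imp (Imp Top a) a"
  by (meson Top_r exch_r provable.mp refl_r)
lemma imp_top: "T \<turnstile>\<^sub>L Imp a Top"
  by (meson K_r Top_r provable.mp)

definition R :: "fm \<Rightarrow> fm \<Rightarrow> bool" where
  "R a b \<longleftrightarrow> TQ \<turnstile>\<^sub>L Imp a b \<and> TQ \<turnstile>\<^sub>L Imp b a"

lemma equivpR: "equivp R"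
  unfolding R_def by (rule equivpI; auto simp: reflp_def symp_def transp_def intro: refl_r trans_r)

quotient_type L = fm / R by (rule equivpR)

lift_definition lz :: L is Bot .
lift_definition lc :: "L \<Rightarrow> L \<Rightarrow> L" is Conj
  unfolding R_def by (meson conjmono_l conjmono_r trans_r)
lift_definition li :: "L \<Rightarrow> L \<Rightarrow> L" is Imp
  unfolding R_def by (meson impmono1 impmono2 trans_r)
lift_definition lle :: "L \<Rightarrow> L \<Rightarrow> bool" is "\<lambda>a b. TQ \<turnstile>\<^sub>L Imp a b"
  unfolding R_def by (meson trans_r)

definition h :: "fm \<Rightarrow> L" where "h = abs_L"

lemma h_Conj[simp]: "h (Conj a b) = lc (h a) (h b)" unfolding h_def by (simp add: lc.abs_eq)
lemma h_Imp[simp]: "h (Imp a b) = li (h a) (h b)" unfolding h_def by (simp add: li.abs_eq)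
lemma h_Bot[simp]: "h Bot = lz" unfolding h_def by (simp add: lz.abs_eq)
lemma h_eq: "h a = h b \<longleftrightarrow> R a b" unfolding h_def by (simp add: L.abs_eq_iff)
lemma h_le: "lle (h a) (h b) \<longleftrightarrow> TQ \<turnstile>\<^sub>L Imp a b" unfolding h_def by (simp add: lle.abs_eq)
lemma h_surj: "\<exists>a. x = h a" unfolding h_def by (metis Quotient_L Quotient_abs_rep)

definition lone :: L where "lone = li lz lz"
definition ng :: "L \<Rightarrow> L" where "ng x = li x lz"

lemma h_Top[simp]: "h Top = lone" unfolding Top_def Neg_def lone_def by simp
lemma h_Neg[simp]: "h (Neg a) = ng (h a)" unfolding Neg_def ng_def by simp

lemma ax_refl: "lle x x"
  by (metis h_le h_surj refl_r)
lemma ax_trans: "lle x y \<Longrightarrow> lle y z \<Longrightarrow> lle x z"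
  by (metis h_le h_surj trans_r)
lemma ax_antisym: "lle x y \<Longrightarrow> lle y x \<Longrightarrow> x = y"
  by (metis h_le h_surj h_eq R_def)
lemma ax_comm: "lc x y = lc y x"
  by (metis h_Conj h_eq h_surj R_def conjcomm_r)
lemma ax_res: "lle (lc x y) z \<longleftrightarrow> lle x (li y z)"
  by (metis h_Conj h_Imp h_le h_surj curry_r uncurry_r)
lemma ax_curry: "li (lc x y) z = li x (li y z)"
proof -
  obtain a b c where "x = h a" "y = h b" "z = h c" by (meson h_surj)
  then show ?thesis by (simp add: h_eq R_def provable.ax Luk_axiom.A5a Luk_axiom.A5b flip: h_Imp h_Conj)
qed
lemma ax_zero: "lle lz x"
  by (metis h_Bot h_le h_surj Luk_axiom.A7 provable.ax)
lemma ax_top: "lle x lone"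
  by (metis h_Top h_le h_surj imp_top)
lemma ax_imp1: "li lone x = x"
  by (metis h_Top h_Imp h_eq h_surj R_def K_r top_imp)
lemma ax_div: "lc x (li x y) = lc y (li y x)"
proof -
  obtain a b where "x = h a" "y = h b" by (meson h_surj)
  then show ?thesis by (simp add: h_eq R_def provable.ax Luk_axiom.A4 flip: h_Imp h_Conj)
qed
lemma ax_dn: "ng (ng x) = x"
proof -
  obtain a where "x = h a" by (meson h_surj)
  then show ?thesis
    by (simp add: h_eq R_def provable.ax Luk_axiom.DN flip: h_Neg)
       (metis Neg_def exch_r refl_r)
qed
lemma ax_prelin: "lle (lc (li (li x y) z) (li (li y x) z)) z"
proof -
  obtain a b c where "x = h a" "y = h b" "z = h c" by (meson h_surj)
  then show ?thesis by (simp add: h_le provable.ax Luk_axiom.A6 uncurry_r flip: h_Imp h_Conj)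
qed



lemma lle_refl[simp]: "lle x x" by (rule ax_refl)
declare ax_trans[trans]
lemma yon_up: "(\<And>z. lle a z \<longleftrightarrow> lle b z) \<Longrightarrow> a = b"
  by (meson ax_antisym ax_refl)
lemma lc_assoc: "lc (lc x y) w = lc x (lc y w)"
  by (rule yon_up) (simp add: ax_res ax_curry)
lemma lc_mono: "lle x y \<Longrightarrow> lle (lc x z) (lc y z)"
  by (meson ax_res ax_trans lle_refl)
lemma lc_mono2: "lle x y \<Longrightarrow> lle (lc z x) (lc z y)"
  by (metis ax_comm lc_mono)
lemma lc_one[simp]: "lc x lone = x"
proof (rule ax_antisym)
  show "lle (lc x lone) x" by (simp add: ax_res ax_imp1)
  have "lle x (li lone (lc x lone))" using ax_res lle_refl by blast
  then show "lle x (lc x lone)" by (simp add: ax_imp1)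
qed
lemma lc_one2[simp]: "lc lone x = x" by (metis ax_comm lc_one)
lemma lc_le1: "lle (lc x y) x" by (metis ax_top lc_mono2 lc_one)
lemma lc_le2: "lle (lc x y) y" by (metis ax_comm lc_le1)
lemma mp_le: "lle (lc x (li x y)) y" by (metis ax_comm ax_res lle_refl)
lemma li_mono2: "lle y z \<Longrightarrow> lle (li x y) (li x z)"
  by (metis ax_comm ax_res ax_trans mp_le)
lemma li_anti1: "lle x y \<Longrightarrow> lle (li y z) (li x z)"
  by (metis ax_res ax_trans lc_mono2 mp_le ax_comm)
lemma le_iff_imp: "lle x y \<longleftrightarrow> li x y = lone"
  by (metis ax_antisym ax_res ax_top lc_one2)
lemma lc_zero[simp]: "lc x lz = lz"
  by (metis ax_antisym ax_res ax_top ax_zero lone_def)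
lemma lc_zero2[simp]: "lc lz x = lz" by (metis ax_comm lc_zero)
lemma le_zero_iff: "lle x lz \<longleftrightarrow> x = lz" by (metis ax_antisym ax_zero lle_refl)
lemma dn[simp]: "ng (ng x) = x" by (rule ax_dn)
lemma ng_anti: "lle x y \<Longrightarrow> lle (ng y) (ng x)" unfolding ng_def by (rule li_anti1)
lemma ng_le_iff: "lle (ng x) (ng y) \<longleftrightarrow> lle y x" by (metis dn ng_anti)
lemma ng_inj: "ng x = ng y \<longleftrightarrow> x = y" by (metis dn)
lemma ng_zero[simp]: "ng lz = lone" by (simp add: ng_def lone_def)
lemma ng_one[simp]: "ng lone = lz" by (metis dn ng_zero)
lemma li_def2: "li x y = ng (lc x (ng y))" by (metis ax_curry ax_dn ng_def)
lemma ng_li: "ng (li x y) = lc x (ng y)" by (simp add: li_def2)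
lemma lc_eq_zero: "lc x y = lz \<longleftrightarrow> lle x (ng y)"
  by (metis ax_res le_zero_iff ng_def)

definition lo :: "L \<Rightarrow> L \<Rightarrow> L" where "lo x y = ng (lc (ng x) (ng y))"
lemma lo_comm: "lo x y = lo y x" by (simp add: lo_def ax_comm)
lemma lo_assoc: "lo (lo x y) z = lo x (lo y z)" by (simp add: lo_def lc_assoc)
lemma lo_zero[simp]: "lo x lz = x" by (simp add: lo_def)
lemma lo_zero2[simp]: "lo lz x = x" by (simp add: lo_def)
lemma lo_one[simp]: "lo x lone = lone" by (simp add: lo_def)
lemma lo_one2[simp]: "lo lone x = lone" by (simp add: lo_def)
lemma ng_lo: "ng (lo x y) = lc (ng x) (ng y)" by (simp add: lo_def)
lemma ng_lc: "ng (lc x y) = lo (ng x) (ng y)" by (simp add: lo_def)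
lemma li_lo: "li x y = lo (ng x) y" by (simp add: lo_def li_def2)
lemma lo_compl[simp]: "lo x (ng x) = lone"
  by (metis le_iff_imp li_lo lle_refl lo_comm)
lemma lo_le1: "lle x (lo x y)"
  by (metis dn lc_le1 ng_anti lo_def)
lemma lo_le2: "lle y (lo x y)" by (metis lo_comm lo_le1)
lemma lo_mono: "lle x y \<Longrightarrow> lle (lo x z) (lo y z)"
  by (simp add: lo_def ng_anti lc_mono)
lemma lo_mono2: "lle x y \<Longrightarrow> lle (lo z x) (lo z y)"
  by (metis lo_comm lo_mono)
lemma le_iff_lo: "lle x y \<longleftrightarrow> lo (ng x) y = lone" by (simp add: le_iff_imp li_lo)

lemma nglc_li: "ng (lc a b) = li a (ng b)" by (simp add: li_def2)

lemma F5gen: "lle w (lo y (lc (ng y) w))"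
proof -
  have "lo y (lc (ng y) w) = ng (lc (ng y) (li (ng y) (ng w)))"
    by (simp add: lo_def nglc_li)
  also have "\<dots> = ng (lc (ng w) (li (ng w) (ng y)))" by (simp add: ax_div)
  finally show ?thesis by (metis dn lc_le1 ng_anti)
qed
lemma F5: "lle y w \<Longrightarrow> lo y (lc (ng y) w) = w"
proof -
  assume a: "lle y w"
  have "lo y (lc (ng y) w) = ng (lc (ng y) (li (ng y) (ng w)))"
    by (simp add: lo_def nglc_li)
  also have "\<dots> = ng (lc (ng w) (li (ng w) (ng y)))" by (simp add: ax_div)
  also have "li (ng w) (ng y) = lone" using a by (simp add: ng_anti le_iff_imp[symmetric])
  finally show ?thesis by simp
qed
lemma B22: "lle (lc (ng b) (lo b w)) w"
proof -
  have "lle (ng w) (lo b (lc (ng b) (ng w)))" by (rule F5gen)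
  then have "lle (ng (lo b (lc (ng b) (ng w)))) w" by (metis dn ng_anti)
  then show ?thesis by (simp add: ng_lo ng_lc)
qed
lemma orth: "lc x y = lz \<Longrightarrow> lc (lo x y) z = lz \<Longrightarrow> lc x (lo y z) = lz"
proof -
  assume 1: "lc x y = lz" and 2: "lc (lo x y) z = lz"
  have y: "lle y (ng x)" using 1 by (metis ax_comm lc_eq_zero)
  have z: "lle z (lc (ng x) (ng y))" using 2 by (metis ax_comm lc_eq_zero ng_lo)
  have "lle (lo y z) (lo y (lc (ng y) (ng x)))" using z by (metis ax_comm lo_mono2)
  also have "lo y (lc (ng y) (ng x)) = ng x" using y by (rule F5)
  finally show ?thesis using ax_trans by (metis ax_comm lc_eq_zero)
qed
lemma G1: "lle (lc x (lo a b)) (lo (lc x a) b)"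
proof -
  have e: "lo q b = li (ng b) q" for q by (simp add: li_lo lo_comm)
  have "lle (lc (lo a b) (ng b)) a" by (metis B22 ax_comm lo_comm)
  then have "lle (lc (lc x (lo a b)) (ng b)) (lc x a)" by (simp add: lc_assoc lc_mono2)
  then show ?thesis by (simp add: e ax_res)
qed

definition lm :: "L \<Rightarrow> L \<Rightarrow> L" where "lm x y = lc x (li x y)"
lemma lm_le1: "lle (lm x y) x" by (simp add: lm_def lc_le1)
lemma lm_le2: "lle (lm x y) y" by (simp add: lm_def mp_le)
lemma lm_comm: "lm x y = lm y x" by (simp add: lm_def ax_div)
lemma lm_glb: "lle z x \<Longrightarrow> lle z y \<Longrightarrow> lle z (lm x y)"
proof -
  assume a: "lle z x" "lle z y"
  have "z = lm z x" using a by (metis lc_one le_iff_imp lm_def)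
  also have "\<dots> = lm x z" by (rule lm_comm)
  also have "lle \<dots> (lm x y)" unfolding lm_def using a by (simp add: lc_mono2 li_mono2)
  finally show ?thesis .
qed
lemma lm_eq1: "lle x y \<Longrightarrow> lm x y = x"
  by (meson ax_antisym lle_refl lm_glb lm_le1)
lemma lm_eq2: "lle y x \<Longrightarrow> lm x y = y"
  by (metis lm_comm lm_eq1)
definition lj :: "L \<Rightarrow> L \<Rightarrow> L" where "lj x y = ng (lm (ng x) (ng y))"
lemma lj_ub1: "lle x (lj x y)" by (metis dn lj_def ng_anti lm_le1)
lemma lj_ub2: "lle y (lj x y)" by (metis dn lj_def ng_anti lm_le2)

lemma G3: "lm (lc x (ng y)) (lc y (ng x)) = lz"
proof -
  let ?z = "lj (li x y) (li y x)"
  have a: "li (li x y) ?z = lone" using lj_ub1 le_iff_imp by blast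
  have b: "li (li y x) ?z = lone" using lj_ub2 le_iff_imp by blast
  have "lle lone ?z" using ax_prelin[of x y ?z] by (simp add: a b)
  then have "?z = lone" by (meson ax_antisym ax_top)
  then have "ng ?z = lz" by simp
  then show ?thesis by (simp add: lj_def ng_li)
qed

lemma G2: "lm a b = lz \<Longrightarrow> lm a c = lz \<Longrightarrow> lm a (lo b c) = lz"
proof -
  assume 1: "lm a b = lz" and 2: "lm a c = lz"
  have "lle a (ng (li a b))" using 1 by (simp add: lm_def lc_eq_zero)
  then have a: "lle a (lc a (ng b))" by (simp add: ng_li)
  have "lm a (lo b c) = lc a (lo b (li a c))"
    by (simp add: lm_def li_lo lo_comm lo_assoc) (metis lo_assoc lo_comm)
  also have "lle \<dots> (lc (lc a (ng b)) (lo b (li a c)))" using a by (rule lc_mono)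
  also have "\<dots> = lc a (lc (ng b) (lo b (li a c)))" by (rule lc_assoc)
  also have "lle \<dots> (lc a (li a c))" by (rule lc_mono2) (rule B22)
  also have "\<dots> = lz" using 2 by (simp add: lm_def)
  finally show ?thesis by (simp add: le_zero_iff)
qed



definition lv :: "L \<Rightarrow> L \<Rightarrow> L" where "lv x y = lm (li (li x y) y) (li (li y x) x)"
definition leq :: "L \<Rightarrow> L \<Rightarrow> L" where "leq x y = lc (li x y) (li y x)"

fun lM :: "nat \<Rightarrow> L \<Rightarrow> L" where
  "lM 0 x = lz" | "lM (Suc k) x = lo x (lM k x)"
fun lP :: "nat \<Rightarrow> L \<Rightarrow> L" where
  "lP 0 x = lone" | "lP (Suc k) x = lc x (lP k x)"

lemma h_Oplus[simp]: "h (Oplus a b) = lo (h a) (h b)" by (simp add: Oplus_def lo_def)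
lemma h_Wedge[simp]: "h (Wedge a b) = lm (h a) (h b)" by (simp add: Wedge_def lm_def)
lemma h_Vee[simp]: "h (Vee a b) = lv (h a) (h b)" by (simp add: Vee_def lv_def)
lemma h_Equiv[simp]: "h (Equiv a b) = leq (h a) (h b)" by (simp add: Equiv_def leq_def)
lemma h_Mult[simp]: "h (Mult k a) = lM k (h a)"
  by (induction k a rule: Mult.induct) auto
lemma h_Pow[simp]: "h (Pow a k) = lP k (h a)"
  by (induction a k rule: Pow.induct) auto

lemma lo_lcomm: "lo x (lo y z) = lo y (lo x z)" by (metis lo_assoc lo_comm)
lemma lM_add: "lM (i + j) x = lo (lM i x) (lM j x)"
  by (induction i) (auto simp: lo_assoc)
lemma lM_mult: "lM (i * j) x = lM i (lM j x)"
  by (induction i) (auto simp: lM_add)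
lemma lM_mono_k: "i \<le> j \<Longrightarrow> lle (lM i x) (lM j x)"
  by (metis le_add_diff_inverse lM_add lo_le1)
lemma lM_lo: "lM k (lo a b) = lo (lM k a) (lM k b)"
  by (induction k) (auto simp: lo_assoc lo_lcomm)
lemma lM_mono_x: "lle a b \<Longrightarrow> lle (lM k a) (lM k b)"
proof (induction k)
  case 0 then show ?case by simp
next
  case (Suc k)
  have "lle (lo a (lM k a)) (lo b (lM k a))" using Suc by (simp add: lo_mono)
  also have "lle \<dots> (lo b (lM k b))" using Suc by (simp add: lo_mono2)
  finally show ?case by simp
qed
lemma ng_lP: "ng (lP k x) = lM k (ng x)"
  by (induction k) (auto simp: ng_lc)
lemma lm_zero[simp]: "lm a lz = lz" by (metis ax_antisym ax_zero lm_le2)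
lemma lm_lM: "lm a b = lz \<Longrightarrow> lm a (lM k b) = lz"
  by (induction k) (auto simp: G2)

section \<open>Structure of an element e with ng e = (n-1) e\<close>

lemma S1: "ng e = lM (n-1) e \<Longrightarrow> 0 < n \<Longrightarrow> n \<le> k \<Longrightarrow> lM k e = lone"
proof -
  assume E: "ng e = lM (n-1) e" and n: "0 < n" "n \<le> k"
  have "lM n e = lo e (lM (n-1) e)" using n by (cases n) auto
  then have "lM n e = lone" using E by (metis lo_compl)
  moreover have "lM k e = lo (lM n e) (lM (k-n) e)" using n by (metis lM_add le_add_diff_inverse)
  ultimately show ?thesis by simp
qed

lemma S2: "ng e = lM (n-1) e \<Longrightarrow> i + j \<le> n \<Longrightarrow> lc (lM i e) (lM j e) = lz"
proof (induction i arbitrary: j)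
  case 0 then show ?case by simp
next
  case (Suc i)
  have j: "j \<le> n - 1" using Suc.prems by simp
  have 1: "lc (lM j e) e = lz"
    using lM_mono_k[OF j, of e] Suc.prems(1) by (simp add: lc_eq_zero)
  have "lc (lM i e) (lM (Suc j) e) = lz" using Suc.IH[of "Suc j"] Suc.prems by simp
  then have 2: "lc (lo (lM j e) e) (lM i e) = lz" by (simp add: ax_comm lo_comm)
  have "lc (lM j e) (lo e (lM i e)) = lz" using orth[OF 1 2] .
  then show ?case by (simp add: ax_comm)
qed

lemma S3: "ng e = lM (n-1) e \<Longrightarrow> 0 < n \<Longrightarrow> j \<le> n \<Longrightarrow> ng (lM j e) = lM (n - j) e"
proof -
  assume E: "ng e = lM (n-1) e" and n: "0 < n" "j \<le> n"
  have a: "lo (lM j e) (lM (n-j) e) = lone" using S1[OF E n(1), of n] n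
    by (simp add: lM_add[symmetric])
  have "lle (ng (lM j e)) (lM (n - j) e)" using a by (simp add: le_iff_lo)
  moreover have "lc (lM (n-j) e) (lM j e) = lz" using S2[OF E] n by simp
  then have "lle (lM (n - j) e) (ng (lM j e))" by (simp add: lc_eq_zero)
  ultimately show ?thesis by (rule ax_antisym)
qed

lemma uniq_le: "ng x = lM (n-1) x \<Longrightarrow> ng y = lM (n-1) y \<Longrightarrow> lle x y"
proof -
  assume X: "ng x = lM (n-1) x" and Y: "ng y = lM (n-1) y"
  define d where "d = lc x (ng y)"
  define d' where "d' = lc y (ng x)"
  define D where "D = lM (n-1) d'"
  have "lle y (lo x d')" unfolding d'_def by (metis F5gen ax_comm)
  then have "lle (lM (n-1) y) (lM (n-1) (lo x d'))" by (rule lM_mono_x)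
  also have "\<dots> = lo (ng x) D" by (simp add: lM_lo X D_def)
  finally have "lle (ng y) (lo (ng x) D)" using Y by simp
  then have "lle d (lc x (lo (ng x) D))" unfolding d_def by (rule lc_mono2)
  also have "lle \<dots> (lo (lc x (ng x)) D)" by (rule G1)
  also have "lc x (ng x) = lz" by (simp add: lc_eq_zero)
  finally have dD: "lle d (lo lz D)" .
  have "lm d d' = lz" unfolding d_def d'_def by (rule G3)
  then have "lm d D = lz" unfolding D_def by (rule lm_lM)
  then have "d = lz" using dD by (simp add: lm_eq1)
  then show ?thesis unfolding d_def by (simp add: lc_eq_zero)
qed

lemma uniq: "ng x = lM (n-1) x \<Longrightarrow> ng y = lM (n-1) y \<Longrightarrow> x = y"
  by (meson ax_antisym uniq_le)

lemma cross: "ng f = lM (n*k-1) f \<Longrightarrow> ng e = lM (n-1) e \<Longrightarrow> 0 < n \<Longrightarrow> 0 < k \<Longrightarrow> e = lM k f"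
proof -
  assume F: "ng f = lM (n*k-1) f" and E: "ng e = lM (n-1) e" and n: "0 < n" "0 < k"
  have "k \<le> n * k" using n by simp
  then have "ng (lM k f) = lM (n*k - k) f" using S3[OF F] n by simp
  also have "n*k - k = (n-1)*k" by (simp add: diff_mult_distrib)
  finally have "ng (lM k f) = lM (n-1) (lM k f)" by (simp add: lM_mult)
  then show ?thesis using E uniq by metis
qed



fun fsem :: "bconn \<Rightarrow> nat \<Rightarrow> nat \<Rightarrow> nat \<Rightarrow> nat" where
  "fsem BProd i j n = i + j - n"
| "fsem BImp i j n = min n (n - i + j)"
| "fsem BOplus i j n = min n (i + j)"
| "fsem BAnd i j n = min i j"
| "fsem BOr i j n = max i j"
| "fsem BEquiv i j n = min n (n - i + j) + min n (n - j + i) - n"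

lemma fsem_real:
  assumes "0 < n" "i \<le> n" "j \<le> n"
  shows "real (fsem c i j n) = real n * bsem c (real i / real n) (real j / real n)"
proof -
  have n: "real n > 0" using assms by simp
  show ?thesis
  proof (cases c)
    case BProd then show ?thesis using assms n
      by (auto simp: field_simps max_def of_nat_diff)
  next
    case BImp then show ?thesis using assms n
      by (auto simp: field_simps min_def of_nat_diff)
  next
    case BOplus then show ?thesis using assms n
      by (auto simp: field_simps min_def)
  next
    case BAnd then show ?thesis using assms n
      by (auto simp: field_simps min_def)
  next
    case BOr then show ?thesis using assms n
      by (auto simp: field_simps max_def)
  next
    case BEquiv then show ?thesis using assms n
      by (auto simp: field_simps min_def abs_if of_nat_diff)
  qed
qed

fun lsem :: "bconn \<Rightarrow> L \<Rightarrow> L \<Rightarrow> L" where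
  "lsem BProd = lc" | "lsem BImp = li" | "lsem BOplus = lo"
| "lsem BAnd = lm" | "lsem BOr = lv" | "lsem BEquiv = leq"

lemma h_bsyn: "h (bsyn c a b) = lsem c (h a) (h b)"
  by (cases c) auto

lemma v_ge: "ng e = lM (n-1) e \<Longrightarrow> 0 < n \<Longrightarrow> lM k e = lM (min n k) e"
  by (metis S1 min_def nle_le)
lemma v_lo: "ng e = lM (n-1) e \<Longrightarrow> 0 < n \<Longrightarrow> lo (lM i e) (lM j e) = lM (min n (i+j)) e"
  by (metis lM_add v_ge)
lemma v_lc: assumes E: "ng e = lM (n-1) e" and n: "0 < n" "i \<le> n" "j \<le> n"
  shows "lc (lM i e) (lM j e) = lM (i + j - n) e"
proof -
  have "lc (lM i e) (lM j e) = ng (lo (ng (lM i e)) (ng (lM j e)))" by (simp add: ng_lo)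
  also have "\<dots> = ng (lM (min n (n - i + (n - j))) e)" using S3[OF E n(1)] n v_lo[OF E n(1)] by simp
  also have "\<dots> = lM (n - min n (n - i + (n - j))) e" using S3[OF E n(1)] by simp
  also have "n - min n (n - i + (n - j)) = i + j - n" using n by simp
  finally show ?thesis .
qed
lemma v_li: assumes E: "ng e = lM (n-1) e" and n: "0 < n" "i \<le> n" "j \<le> n"
  shows "li (lM i e) (lM j e) = lM (min n (n - i + j)) e"
  using S3[OF E n(1) n(2)] v_lo[OF E n(1)] by (simp add: li_lo)
lemma v_lm: assumes E: "ng e = lM (n-1) e" and n: "0 < n" "i \<le> n" "j \<le> n"
  shows "lm (lM i e) (lM j e) = lM (min i j) e"
  by (cases "i \<le> j") (auto simp: lm_eq1 lm_eq2 lM_mono_k min_def)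
lemma lv_le: "lle x y \<Longrightarrow> lv x y = y"
proof -
  assume a: "lle x y"
  have 1: "li x y = lone" using a le_iff_imp by blast
  have "li (li y x) x = lo (lc y (ng x)) x" by (simp only: li_lo[of "li y x" x] ng_li)
  also have "\<dots> = lo x (lc (ng x) y)" by (simp add: lo_comm ax_comm)
  also have "\<dots> = y" using a by (rule F5)
  finally show ?thesis using 1 by (simp add: lv_def ax_imp1 lm_eq1)
qed
lemma lv_comm: "lv x y = lv y x" by (simp add: lv_def lm_comm)
lemma v_lv: assumes E: "ng e = lM (n-1) e" and n: "0 < n" "i \<le> n" "j \<le> n"
  shows "lv (lM i e) (lM j e) = lM (max i j) e"
  by (cases "i \<le> j") (auto simp: lv_le lM_mono_k max_def, metis lM_mono_k lv_comm lv_le nle_le)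
lemma v_leq: assumes E: "ng e = lM (n-1) e" and n: "0 < n" "i \<le> n" "j \<le> n"
  shows "leq (lM i e) (lM j e) = lM (min n (n - i + j) + min n (n - j + i) - n) e"
  unfolding leq_def using assms by (simp add: v_li v_lc)

lemma v_bin: assumes E: "ng e = lM (n-1) e" and n: "0 < n" "i \<le> n" "j \<le> n"
  shows "lsem c (lM i e) (lM j e) = lM (fsem c i j n) e"
  using assms by (cases c) (simp_all add: v_lc v_li v_lo v_lm v_lv v_leq)

lemma eqv_h: "TQ \<turnstile>\<^sub>L Equiv a b \<Longrightarrow> h a = h b"
  unfolding h_eq R_def Equiv_def by (meson conjE1 conjE2)
lemma h_eqv: "h a = h b \<Longrightarrow> TQ \<turnstile>\<^sub>L Equiv a b"
  unfolding h_eq R_def Equiv_def by (meson conjI_r)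
lemma TQ_h: "Equiv a b \<in> TQ \<Longrightarrow> h a = h b"
  by (simp add: eqv_h provable.hyp)

definition E :: "nat \<Rightarrow> L" where "E n = h (q 1 n)"

lemma T1: "0 < n \<Longrightarrow> ng (E n) = lM (n-1) (E n)"
proof -
  assume n: "0 < n"
  show ?thesis
  proof (cases "n = 1")
    case True
    have "h (q 1 1) = lone" using TQ_h[of "q 1 1" Top] by (simp add: TQ_def)
    then show ?thesis using True by (simp add: E_def)
  next
    case False
    then have "n \<ge> 2" using n by simp
    then have "E n = lP (n-1) (ng (E n))" unfolding E_def
      using TQ_h[of "q 1 n" "Pow (Neg (q 1 n)) (n - 1)"] by (auto simp: TQ_def)
    then have "ng (E n) = ng (lP (n-1) (ng (E n)))" by simp
    then show ?thesis by (simp add: ng_lP)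
  qed
qed

lemma T2: "0 < n \<Longrightarrow> m \<le> n \<Longrightarrow> h (q m n) = lM m (E n)"
proof -
  assume n: "0 < n" and m: "m \<le> n"
  show ?thesis
  proof (cases "n = 1")
    case True
    then have "m = 0 \<or> m = 1" using m by auto
    moreover have "\<exists>n. Equiv (q 0 1) Bot = Equiv (q 0 n) Bot \<and> 0 < n" by (rule exI[of _ 1]) simp
    then have "Equiv (q 0 1) Bot \<in> TQ" unfolding TQ_def by blast
    then have "h (q 0 1) = lz" using TQ_h by fastforce
    ultimately show ?thesis using True by (auto simp: E_def)
  next
    case False
    then have "n \<ge> 2" using n by simp
    then show ?thesis using m TQ_h[of "q m n" "Mult m (q 1 n)"] by (auto simp: TQ_def E_def)
  qed
qed

lemma T3: "0 < n \<Longrightarrow> 0 < k \<Longrightarrow> E n = lM k (E (n*k))"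
  by (rule cross[OF T1 T1]) auto

lemma T4: "0 < n \<Longrightarrow> 0 < k \<Longrightarrow> m \<le> n \<Longrightarrow> h (q m n) = lM (m*k) (E (n*k))"
proof -
  assume a: "0 < n" "0 < k" "m \<le> n"
  have "h (q m n) = lM m (lM k (E (n*k)))" using T2[OF a(1) a(3)] T3[OF a(1) a(2)] by metis
  then show ?thesis by (simp add: lM_mult)
qed

lemma part1:
  assumes "0 < n" "m \<le> n" "0 < l" "k \<le> l" "0 < t" "p \<le> t"
    and hb: "bsem c (real m / real n) (real k / real l) = real p / real t"
  shows "TQ \<turnstile>\<^sub>L Equiv (bsyn c (q m n) (q k l)) (q p t)"
proof -
  define N where "N = n*(l*t)"
  have N: "0 < N" using assms by (simp add: N_def)
  have N2: "l*(n*t) = N" "t*(n*l) = N" by (simp_all add: N_def ac_simps)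
  define e where "e = E N"
  have Ee: "ng e = lM (N-1) e" unfolding e_def using N by (rule T1)
  define i where "i = m*(l*t)"
  define j where "j = k*(n*t)"
  define r where "r = p*(n*l)"
  have hm: "h (q m n) = lM i e" unfolding i_def e_def N_def using assms T4[of n "l*t" m] by simp
  have hk: "h (q k l) = lM j e" unfolding j_def e_def using assms T4[of l "n*t" k] N2 by simp
  have hp: "h (q p t) = lM r e" unfolding r_def e_def using assms T4[of t "n*l" p] N2 by simp
  have iN: "i \<le> N" unfolding i_def N_def using assms by simp
  have jN: "j \<le> N" unfolding j_def N_def using assms by (simp add: ac_simps)
  have ri: "real i / real N = real m / real n" unfolding i_def N_def using assms by (simp add: field_simps)
  have rj: "real j / real N = real k / real l" unfolding j_def N_def using assms by (simp add: field_simps)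
  have "real (fsem c i j N) = real N * (real p / real t)"
    using fsem_real[OF N iN jN, of c] ri rj hb by simp
  also have "\<dots> = real r" unfolding r_def N_def using assms by (simp add: field_simps)
  finally have fr: "fsem c i j N = r" by (simp only: of_nat_eq_iff)
  have "h (bsyn c (q m n) (q k l)) = lM (fsem c i j N) e"
    by (simp add: h_bsyn hm hk v_bin[OF Ee N iN jN])
  then show ?thesis using fr hp by (simp add: h_eqv)
qed

lemma part2:
  assumes "0 < n" "m \<le> n" "0 < t" "p \<le> t" and hb: "1 - real m / real n = real p / real t"
  shows "TQ \<turnstile>\<^sub>L Equiv (Neg (q m n)) (q p t)"
proof -
  define N where "N = n*t"
  have N: "0 < N" using assms by (simp add: N_def)
  define e where "e = E N"
  have Ee: "ng e = lM (N-1) e" unfolding e_def using N by (rule T1)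
  have hm: "h (q m n) = lM (m*t) e" unfolding e_def N_def using assms T4[of n t m] by simp
  have hp: "h (q p t) = lM (p*n) e" unfolding e_def N_def using assms T4[of t n p] by (simp add: ac_simps)
  have iN: "m*t \<le> N" unfolding N_def using assms by simp
  have "real (N - m*t) = real N * (1 - real m / real n)" using iN unfolding N_def using assms
    by (simp add: field_simps of_nat_diff)
  also have "\<dots> = real N * (real p / real t)" using hb by simp
  also have "\<dots> = real (p*n)" unfolding N_def using assms(1-4) by (simp add: field_simps)
  finally have fr: "N - m*t = p*n" by (simp only: of_nat_eq_iff)
  have "h (Neg (q m n)) = lM (N - m*t) e" using S3[OF Ee N iN] hm by simp
  then show ?thesis using fr hp by (simp add: h_eqv)
qed

lemma part3:
  assumes "0 < n" "m \<le> n" "0 < n'" "m' \<le> n'" and hb: "real m / real n = real m' / real n'"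
  shows "TQ \<turnstile>\<^sub>L Equiv (q m n) (q m' n')"
proof -
  have hm: "h (q m n) = lM (m*n') (E (n*n'))" using assms T4[of n n' m] by simp
  have hp: "h (q m' n') = lM (m'*n) (E (n*n'))" using assms T4[of n' n m'] by (simp add: ac_simps)
  have "real (m*n') = real (m'*n)" using hb assms by (simp add: field_simps)
  then have "m*n' = m'*n" by (simp only: of_nat_eq_iff)
  then show ?thesis using hm hp by (simp add: h_eqv)
qed

lemma part4: "0 < n \<Longrightarrow> TQ \<turnstile>\<^sub>L Equiv (q n n) Top"
proof -
  assume n: "0 < n"
  have "lM n (E n) = lone" using S1[OF T1[OF n] n] by simp
  then show ?thesis using T2[OF n] by (simp add: h_eqv)
qed

theorem lemma3p4:
  shows
    "(\<forall>c m n k l p t. 0 < n \<and> m \<le> n \<and> 0 < l \<and> k \<le> l \<and> 0 < t \<and> p \<le> t \<and>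
        bsem c (real m / real n) (real k / real l) = real p / real t
        \<longrightarrow> TQ \<turnstile>\<^sub>L Equiv (bsyn c (q m n) (q k l)) (q p t))
   \<and> (\<forall>m n p t. 0 < n \<and> m \<le> n \<and> 0 < t \<and> p \<le> t \<and>
        1 - real m / real n = real p / real t
        \<longrightarrow> TQ \<turnstile>\<^sub>L Equiv (Neg (q m n)) (q p t))
   \<and> (\<forall>m n m' n'. 0 < n \<and> m \<le> n \<and> 0 < n' \<and> m' \<le> n' \<and>
        real m / real n = real m' / real n'
        \<longrightarrow> TQ \<turnstile>\<^sub>L Equiv (q m n) (q m' n'))
   \<and> (\<forall>n. 0 < n \<longrightarrow> TQ \<turnstile>\<^sub>L Equiv (q n n) Top)"
  apply (intro conjI allI impI)
     apply (elim conjE; rule part1; assumption)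
    apply (elim conjE; rule part2; assumption)
   apply (elim conjE; rule part3; assumption)
  apply (rule part4; assumption)
  done

end
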